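(* Let $n\ge2$, $\nu\in I^n$ with $\nu_a=\nu_{a+1}$ for some $1\le a<n$, let $M$ be an $R(n)$-module and $f\in\mathbf k[x_1,\dots,x_n]$. If $f\,e(\nu)M=0$, then $$(\partial_af)\,\mathcal P_{\nu_a}(x_a,x_{a+1})\mathcal P_{\nu_a}(x_{a+1},x_a)\,e(\nu)M=0\quad\text{and}\quad(s_af)\,\mathcal P_{\nu_a}(x_a,x_{a+1})\mathcal P_{\nu_a}(x_{a+1},x_a)\,e(\nu)M=0,$$ where $s_af$ is $f$ with $x_a,x_{a+1}$ interchanged and $\partial_af=(s_af-f)/(x_a-x_{a+1})$.
   Context: Let $I$ be a finite set and $\mathtt A=(a_{ij})_{i,j\in I}$ an integer matrix with $a_{ii}=2$ or $a_{ii}\in 2\mathbb Z_{\le 0}$, $a_{ij}\le 0$ for $i\neq j$, and $a_{ij}=0\iff a_{ji}=0$. Assume there are $d_i\in\mathbb Z_{>0}$ with $(d_ia_{ij})$ symmetric, and fix simple roots $\alpha_i$ with symmetric form $(\alpha_i|\alpha_j)=d_ia_{ij}$. Let $\mathbf k=\bigoplus_{n\ge0}\mathbf k_n$ be a graded commutative ring, $\mathcal Q_{i,j}(u,v)\in\mathbf k[u,v]$ with $\mathcal Q_{i,j}(u,v)=\mathcal Q_{j,i}(v,u)$, $\mathcal Q_{i,i}=0$, and for $i\ne j$, $\mathcal Q_{i,j}=\sum_{d_ip+d_jq\le-(\alpha_i|\alpha_j)}t^{p,q}_{i,j}u^pv^q$ with $t^{-a_{ij},0}_{i,j}\in\mathbf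 k_0^\times$, $t^{p,q}_{i,j}\in\mathbf k_{-2((\alpha_i|\alpha_j)+d_ip+d_jq)}$, $t^{p,q}_{i,j}=t^{q,p}_{j,i}$; $\mathcal P_i(u,v)=\sum_{p+q\le1-a_{ii}/2}w_i^{p,q}u^pv^q$ with $w_i^{1-a_{ii}/2,0},w_i^{0,1-a_{ii}/2}\in\mathbf k_0^\times$, $w_i^{p,q}\in\mathbf k_{2d_i(1-p-q-a_{ii}/2)}$. $R(n)$ is the $\mathbf k$-algebra generated by $e(\nu)$ ($\nu\in I^n$), $x_k$, $\tau_\ell$ with relations: $e(\nu)e(\nu')=\delta_{\nu\nu'}e(\nu)$, $\sum e(\nu)=1$, $x_kx_l=x_lx_k$, $x_ke(\nu)=e(\nu)x_k$, $\tau_\ell e(\nu)=e(s_\ell\nu)\tau_\ell$, $\tau_k\tau_\ell=\tau_\ell\tau_k$ ($|k-\ell|>1$); $\tau_k^2e(\nu)=(\partial_k\mathcal P_{\nu_k}(x_k,x_{k+1}))\tau_ke(\nu)$ if $\nu_k=\nu_{k+1}$, else $\mathcal Q_{\nu_k,\nu_{k+1}}(x_k,x_{k+1})e(\nu)$; $(\tau_kx_\ell-x_{s_k(\ell)}\tau_k)e(\nu)$ is $-\mathcal P_{\nu_k}(x_k,x_{k+1})e(\nu)$ if $\ell=k,\nu_k=\nu_{k+1}$, is $\mathcal P_{\nu_k}(x_k,x_{k+1})e(\nu)$ if $\ell=k+1,\nu_k=\nu_{k+1}$, and $0$ otherwise; $(\tau_{k+1}\tau_k\tau_{k+1}-\tau_k\tau_{k+1}\tau_k)e(\nu)$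 is $\mathcal P_{\nu_k}(x_k,x_{k+2})\overline{\mathcal Q}_{\nu_k,\nu_{k+1}}(x_k,x_{k+1},x_{k+2})e(\nu)$ if $\nu_k=\nu_{k+2}\ne\nu_{k+1}$, is $\overline{\mathcal P}'_{\nu_k}(x_k,x_{k+1},x_{k+2})\tau_ke(\nu)+\overline{\mathcal P}''_{\nu_k}(x_k,x_{k+1},x_{k+2})\tau_{k+1}e(\nu)$ if $\nu_k=\nu_{k+1}=\nu_{k+2}$, and $0$ otherwise; where $s_k=(k,k+1)$ acts on $I^n$ and on polynomials, $\partial_kf=(s_kf-f)/(x_k-x_{k+1})$, $\overline{\mathcal Q}_{i,j}(u,v,w)=\frac{\mathcal Q_{i,j}(u,v)-\mathcal Q_{i,j}(w,v)}{u-w}$, $\overline{\mathcal P}'_i(u,v,w)=\frac{\mathcal P_i(v,u)\mathcal P_i(u,w)}{(u-v)(u-w)}+\frac{\mathcal P_i(u,w)\mathcal P_i(v,w)}{(u-w)(v-w)}-\frac{\mathcal P_i(u,v)\mathcal P_i(v,w)}{(u-v)(v-w)}$, $\overline{\mathcal P}''_i(u,v,w)=-\frac{\mathcal P_i(u,v)\mathcal P_i(u,w)}{(u-v)(u-w)}-\frac{\mathcal P_i(u,w)\mathcal P_i(w,v)}{(u-w)(v-w)}+\frac{\mathcal P_i(u,v)\mathcal P_i(v,w)}{(u-v)(v-w)}$. *)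

theory Defs
  imports Main "HOL.Modules" "HOL-Library.Poly_Mapping"
begin

text \<open>Multivariate polynomials over k in the variables x_i (i :: nat) are
  represented as finitely supported maps from monomials (finitely supported exponent
  vectors) to coefficients.\<close>

type_synonym 'k mpol = "(nat \<Rightarrow>\<^sub>0 nat) \<Rightarrow>\<^sub>0 'k"

definition mconst :: "'k::comm_ring_1 \<Rightarrow> 'k mpol" where
  "mconst c = Poly_Mapping.single 0 c"

definition Xv :: "nat \<Rightarrow> 'k::comm_ring_1 mpol" where
  "Xv i = Poly_Mapping.single (Poly_Mapping.single i 1) 1"

definition rename :: "(nat \<Rightarrow> nat) \<Rightarrow> 'k::comm_ring_1 mpol \<Rightarrow> 'k mpol" where
  "rename sg f = (\<Sum>mo::nat \<Rightarrow>\<^sub>0 nat\<in>Poly_Mapping.keys f. mconst (Poly_Mapping.lookup f mo) * (\<Prod>i\<in>Poly_Mapping.keys mo. Xv (sg i) ^ Poly_Mapping.lookup mo i))"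

definition sidx :: "nat \<Rightarrow> nat \<Rightarrow> nat" where
  "sidx k l = (if l = k then k + 1 else if l = k + 1 then k else l)"

definition spol :: "nat \<Rightarrow> 'k::comm_ring_1 mpol \<Rightarrow> 'k mpol" where
  "spol k f = rename (sidx k) f"

text \<open>Exact division in the polynomial ring (the quotient is unique since the
  divisors used below are non-zero-divisors).\<close>
definition pdiv :: "'k::comm_ring_1 mpol \<Rightarrow> 'k mpol \<Rightarrow> 'k mpol" where
  "pdiv h g = (THE q. g * q = h)"

definition dpol :: "nat \<Rightarrow> 'k::comm_ring_1 mpol \<Rightarrow> 'k mpol" where
  "dpol k f = pdiv (spol k f - f) (Xv k - Xv (k + 1))"

definition bipol :: "(nat \<Rightarrow> nat \<Rightarrow> 'k::comm_ring_1) \<Rightarrow> nat \<Rightarrow> nat \<Rightarrow> 'k mpol" where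
  "bipol c a b = (\<Sum>(p,q)\<in>{(p,q). c p q \<noteq> 0}. mconst (c p q) * Xv a ^ p * Xv b ^ q)"

definition Qbar where
  "Qbar c a b d = pdiv (bipol c a b - bipol c d b) (Xv a - Xv d)"

definition Pp where
  "Pp c u v w = pdiv
     (bipol c v u * bipol c u w * (Xv v - Xv w) + bipol c u w * bipol c v w * (Xv u - Xv v)
      - bipol c u v * bipol c v w * (Xv u - Xv w))
     ((Xv u - Xv v) * (Xv u - Xv w) * (Xv v - Xv w))"

definition Ppp where
  "Ppp c u v w = pdiv
     (- (bipol c u v * bipol c u w * (Xv v - Xv w)) - bipol c u w * bipol c w v * (Xv u - Xv v)
      + bipol c u v * bipol c v w * (Xv u - Xv w))
     ((Xv u - Xv v) * (Xv u - Xv w) * (Xv v - Xv w))"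

definition act :: "('k::comm_ring_1 \<Rightarrow> 'm \<Rightarrow> 'm) \<Rightarrow> (nat \<Rightarrow> 'm \<Rightarrow> 'm) \<Rightarrow> 'k mpol \<Rightarrow> 'm \<Rightarrow> 'm::ab_group_add" where
  "act sc X f m = (\<Sum>mo::nat \<Rightarrow>\<^sub>0 nat\<in>Poly_Mapping.keys f. sc (Poly_Mapping.lookup f mo)
      (foldr (\<lambda>i g. (X i ^^ Poly_Mapping.lookup mo i) \<circ> g) (sorted_list_of_set (Poly_Mapping.keys mo)) id m))"

definition graded :: "(int \<Rightarrow> 'k::comm_ring_1 set) \<Rightarrow> bool" where
  "graded kg \<longleftrightarrow>
     (\<forall>n. 0 \<in> kg n \<and> (\<forall>x\<in>kg n. \<forall>y\<in>kg n. x + y \<in> kg n \<and> - x \<in> kg n)) \<and>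
     (\<forall>n<0. kg n = {0}) \<and> 1 \<in> kg 0 \<and>
     (\<forall>m n. \<forall>x\<in>kg m. \<forall>y\<in>kg n. x * y \<in> kg (m + n)) \<and>
     (\<forall>x. \<exists>!c::int \<Rightarrow> 'k. (\<forall>n. c n \<in> kg n) \<and> finite {n. c n \<noteq> 0} \<and>
            x = (\<Sum>n\<in>{n. c n \<noteq> 0}. c n))"

definition unit0 :: "(int \<Rightarrow> 'k::comm_ring_1 set) \<Rightarrow> 'k \<Rightarrow> bool" where
  "unit0 kg x \<longleftrightarrow> x \<in> kg 0 \<and> (\<exists>y\<in>kg 0. x * y = 1)"

definition cartan :: "('i \<Rightarrow> 'i \<Rightarrow> int) \<Rightarrow> ('i \<Rightarrow> int) \<Rightarrow> bool" where
  "cartan A d \<longleftrightarrow>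
     (\<forall>i. A i i = 2 \<or> (A i i \<le> 0 \<and> even (A i i))) \<and>
     (\<forall>i j. i \<noteq> j \<longrightarrow> A i j \<le> 0) \<and>
     (\<forall>i j. A i j = 0 \<longleftrightarrow> A j i = 0) \<and>
     (\<forall>i. d i > 0) \<and> (\<forall>i j. d i * A i j = d j * A j i)"

text \<open>Conditions on Q_{i,j}(u,v) = \<Sum> t i j p q u^p v^q; (mo_i|mo_j) = d_i a_ij.\<close>
definition Qdata where
  "Qdata kg A d t \<longleftrightarrow>
     (\<forall>i j p q. t i j p q = t j i q p) \<and>
     (\<forall>i p q. t i i p q = 0) \<and>
     (\<forall>i j p q. i \<noteq> j \<longrightarrow> t i j p q \<noteq> 0 \<longrightarrow> d i * int p + d j * int q \<le> - (d i * A i j)) \<and>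
     (\<forall>i j. i \<noteq> j \<longrightarrow> unit0 kg (t i j (nat (- A i j)) 0)) \<and>
     (\<forall>i j p q. i \<noteq> j \<longrightarrow> t i j p q \<in> kg (-2 * (d i * A i j + d i * int p + d j * int q)))"

text \<open>Conditions on P_i(u,v) = \<Sum> w i p q u^p v^q.\<close>
definition Pdata where
  "Pdata kg A d w \<longleftrightarrow>
     (\<forall>i p q. w i p q \<noteq> 0 \<longrightarrow> int p + int q \<le> 1 - A i i div 2) \<and>
     (\<forall>i. unit0 kg (w i (nat (1 - A i i div 2)) 0) \<and> unit0 kg (w i 0 (nat (1 - A i i div 2)))) \<and>
     (\<forall>i p q. w i p q \<in> kg (2 * d i * (1 - int p - int q - A i i div 2)))"

text \<open>s_k acting on sequences \<nu> \<in> I^n (lists, entry \<nu>_k = \<nu> ! (k-1)).\<close>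
definition sseq :: "nat \<Rightarrow> 'i list \<Rightarrow> 'i list" where
  "sseq k nu = nu[k - 1 := nu ! k, k := nu ! (k - 1)]"

abbreviation nth1 :: "'i list \<Rightarrow> nat \<Rightarrow> 'i" where
  "nth1 nu k \<equiv> nu ! (k - 1)"

text \<open>An R(n)-module: a k-module M with k-linear operators E \<nu> = e(\<nu>), X k = x_k,
  T l = \<tau>_l satisfying the defining relations of R(n).\<close>
definition Rmod ::
  "nat \<Rightarrow> ('i::finite \<Rightarrow> nat \<Rightarrow> nat \<Rightarrow> 'k::comm_ring_1) \<Rightarrow> ('i \<Rightarrow> 'i \<Rightarrow> nat \<Rightarrow> nat \<Rightarrow> 'k) \<Rightarrow>
   ('k \<Rightarrow> 'm::ab_group_add \<Rightarrow> 'm) \<Rightarrow> ('i list \<Rightarrow> 'm \<Rightarrow> 'm) \<Rightarrow> (nat \<Rightarrow> 'm \<Rightarrow> 'm) \<Rightarrow> (nat \<Rightarrow> 'm \<Rightarrow> 'm) \<Rightarrow> bool"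
where
  "Rmod n w t sc E X T \<longleftrightarrow>
    module sc \<and>
    (\<forall>nu. length nu = n \<longrightarrow> module_hom sc sc (E nu)) \<and>
    (\<forall>k\<in>{1..n}. module_hom sc sc (X k)) \<and>
    (\<forall>l\<in>{1..<n}. module_hom sc sc (T l)) \<and>
    (\<forall>nu nu' m. length nu = n \<longrightarrow> length nu' = n \<longrightarrow>
        E nu (E nu' m) = (if nu = nu' then E nu m else 0)) \<and>
    (\<forall>m. (\<Sum>nu\<in>{nu. length nu = n}. E nu m) = m) \<and>
    (\<forall>k\<in>{1..n}. \<forall>l\<in>{1..n}. \<forall>m. X k (X l m) = X l (X k m)) \<and>
    (\<forall>k\<in>{1..n}. \<forall>nu m. length nu = n \<longrightarrow> X k (E nu m) = E nu (X k m)) \<and>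
    (\<forall>l\<in>{1..<n}. \<forall>nu m. length nu = n \<longrightarrow> T l (E nu m) = E (sseq l nu) (T l m)) \<and>
    (\<forall>k\<in>{1..<n}. \<forall>l\<in>{1..<n}. \<forall>m. (k + 1 < l \<or> l + 1 < k) \<longrightarrow> T k (T l m) = T l (T k m)) \<and>
    (\<forall>k\<in>{1..<n}. \<forall>nu m. length nu = n \<longrightarrow>
        T k (T k (E nu m)) =
          (if nth1 nu k = nth1 nu (k + 1)
           then act sc X (dpol k (bipol (w (nth1 nu k)) k (k + 1))) (T k (E nu m))
           else act sc X (bipol (t (nth1 nu k) (nth1 nu (k + 1))) k (k + 1)) (E nu m))) \<and>
    (\<forall>k\<in>{1..<n}. \<forall>l\<in>{1..n}. \<forall>nu m. length nu = n \<longrightarrow>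
        T k (X l (E nu m)) - X (sidx k l) (T k (E nu m)) =
          (if l = k \<and> nth1 nu k = nth1 nu (k + 1)
           then - act sc X (bipol (w (nth1 nu k)) k (k + 1)) (E nu m)
           else if l = k + 1 \<and> nth1 nu k = nth1 nu (k + 1)
           then act sc X (bipol (w (nth1 nu k)) k (k + 1)) (E nu m)
           else 0)) \<and>
    (\<forall>k. 1 \<le> k \<longrightarrow> k + 2 \<le> n \<longrightarrow> (\<forall>nu m. length nu = n \<longrightarrow>
        T (k + 1) (T k (T (k + 1) (E nu m))) - T k (T (k + 1) (T k (E nu m))) =
          (if nth1 nu k = nth1 nu (k + 2) \<and> nth1 nu k \<noteq> nth1 nu (k + 1)
           then act sc X (bipol (w (nth1 nu k)) k (k + 2) *
                          Qbar (t (nth1 nu k) (nth1 nu (k + 1))) k (k + 1) (k + 2)) (E nu m)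
           else if nth1 nu k = nth1 nu (k + 1) \<and> nth1 nu k = nth1 nu (k + 2)
           then act sc X (Pp (w (nth1 nu k)) k (k + 1) (k + 2)) (T k (E nu m))
              + act sc X (Ppp (w (nth1 nu k)) k (k + 1) (k + 2)) (T (k + 1) (E nu m))
           else 0)))"

end

theory Submission
  imports Defs
begin


definition vars :: "'k::comm_ring_1 mpol \<Rightarrow> nat set" where
  "vars p = \<Union> (Poly_Mapping.keys ` Poly_Mapping.keys p)"

lemma poly_expand:
  fixes p :: "'a \<Rightarrow>\<^sub>0 'b::comm_monoid_add"
  shows "p = (\<Sum>mo\<in>Poly_Mapping.keys p. Poly_Mapping.single mo (Poly_Mapping.lookup p mo))"
proof (rule poly_mapping_eqI)
  fix k
  show "Poly_Mapping.lookup p k = Poly_Mapping.lookup (\<Sum>mo\<in>Poly_Mapping.keys p. Poly_Mapping.single mo (Poly_Mapping.lookup p mo)) k"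
    by (auto simp: lookup_sum lookup_single when_def in_keys_iff sum.delta)
qed

lemma keys_add_nat:
  fixes m1 m2 :: "'a \<Rightarrow>\<^sub>0 nat"
  shows "Poly_Mapping.keys (m1 + m2) = Poly_Mapping.keys m1 \<union> Poly_Mapping.keys m2"
  by (auto simp: in_keys_iff lookup_add)

lemma lookup_single_mult:
  fixes q :: "'k::comm_ring_1 mpol"
  shows "Poly_Mapping.lookup (Poly_Mapping.single k c * q) m =
    (\<Sum>mo\<in>Poly_Mapping.keys q. if k + mo = m then c * Poly_Mapping.lookup q mo else 0)"
proof -
  have "Poly_Mapping.single k c * q = (\<Sum>mo\<in>Poly_Mapping.keys q. Poly_Mapping.single k c * Poly_Mapping.single mo (Poly_Mapping.lookup q mo))"
    by (subst poly_expand[of q]) (simp add: sum_distrib_left)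
  also have "\<dots> = (\<Sum>mo\<in>Poly_Mapping.keys q. Poly_Mapping.single (k + mo) (c * Poly_Mapping.lookup q mo))"
    by (simp add: mult_single)
  finally show ?thesis
    by (simp add: lookup_sum lookup_single when_def)
qed

lemma nzd:
  fixes q :: "'k::comm_ring_1 mpol"
  assumes ab: "a \<noteq> b" and z: "(Xv a - Xv b) * q = 0"
  shows "q = 0"
proof (rule ccontr)
  assume q: "q \<noteq> 0"
  let ?e = "\<lambda>i. Poly_Mapping.single i (1::nat)"
  have ne: "Poly_Mapping.keys q \<noteq> {}" using q by simp
  define M where "M = Max ((\<lambda>mo. Poly_Mapping.lookup mo a) ` Poly_Mapping.keys q)"
  have "M \<in> (\<lambda>mo. Poly_Mapping.lookup mo a) ` Poly_Mapping.keys q"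
    unfolding M_def using ne by (intro Max_in) auto
  then obtain mo where mo: "mo \<in> Poly_Mapping.keys q" "Poly_Mapping.lookup mo a = M" by auto
  have maxM: "\<And>m'. m' \<in> Poly_Mapping.keys q \<Longrightarrow> Poly_Mapping.lookup m' a \<le> M"
    unfolding M_def by (intro Max_ge) auto
  have 1: "Poly_Mapping.lookup (Xv a * q) (mo + ?e a) = Poly_Mapping.lookup q mo"
  proof -
    have "Poly_Mapping.lookup (Xv a * q) (mo + ?e a) =
      (\<Sum>m'\<in>Poly_Mapping.keys q. if ?e a + m' = mo + ?e a then 1 * Poly_Mapping.lookup q m' else 0)"
      unfolding Xv_def by (rule lookup_single_mult)
    also have "\<dots> = (\<Sum>m'\<in>Poly_Mapping.keys q. if m' = mo then Poly_Mapping.lookup q m' else 0)"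
      by (intro sum.cong refl) (metis add.commute add_left_cancel mult_1)
    also have "\<dots> = Poly_Mapping.lookup q mo" using mo by (simp add: sum.delta)
    finally show ?thesis .
  qed
  have 2: "Poly_Mapping.lookup (Xv b * q) (mo + ?e a) = 0"
  proof -
    have "Poly_Mapping.lookup (Xv b * q) (mo + ?e a) =
      (\<Sum>m'\<in>Poly_Mapping.keys q. if ?e b + m' = mo + ?e a then 1 * Poly_Mapping.lookup q m' else 0)"
      unfolding Xv_def by (rule lookup_single_mult)
    also have "\<dots> = 0"
    proof (intro sum.neutral ballI)
      fix m' assume m': "m' \<in> Poly_Mapping.keys q"
      show "(if ?e b + m' = mo + ?e a then 1 * Poly_Mapping.lookup q m' else 0) = 0"
      proof (cases "?e b + m' = mo + ?e a")
        case True
        then have "Poly_Mapping.lookup (?e b + m') a = Poly_Mapping.lookup (mo + ?e a) a" by simp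
        then have "Poly_Mapping.lookup m' a = M + 1" using ab mo(2) by (simp add: lookup_add lookup_single)
        with maxM[OF m'] show ?thesis by simp
      qed simp
    qed
    finally show ?thesis .
  qed
  have "Poly_Mapping.lookup ((Xv a - Xv b) * q) (mo + ?e a) = Poly_Mapping.lookup q mo"
    using 1 2 by (simp add: left_diff_distrib lookup_minus)
  with z mo(1) show False by (simp add: in_keys_iff)
qed

lemma pdiv_eq:
  fixes q h :: "'k::comm_ring_1 mpol"
  assumes ab: "a \<noteq> b" and e: "(Xv a - Xv b) * q = h"
  shows "pdiv h (Xv a - Xv b) = q"
  unfolding pdiv_def
proof (rule the_equality)
  show "(Xv a - Xv b) * q = h" by fact
  fix q' assume "(Xv a - Xv b) * q' = h"
  with e have "(Xv a - Xv b) * (q' - q) = 0" by (simp add: right_diff_distrib)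
  from nzd[OF ab this] show "q' = q" by simp
qed




definition Rm :: "(nat \<Rightarrow> nat) \<Rightarrow> (nat \<Rightarrow>\<^sub>0 nat) \<Rightarrow> 'k::comm_ring_1 mpol" where
  "Rm sg mo = (\<Prod>i\<in>Poly_Mapping.keys mo. Xv (sg i) ^ Poly_Mapping.lookup mo i)"

lemma mconst_add: "mconst (a + b) = mconst a + mconst b"
  by (simp add: mconst_def single_add)
lemma mconst_mult: "mconst (a * b) = mconst a * (mconst b :: 'k::comm_ring_1 mpol)"
  by (simp add: mconst_def mult_single)
lemma mconst_0[simp]: "mconst 0 = 0" by (simp add: mconst_def)
lemma mconst_1[simp]: "mconst 1 = 1" by (simp add: mconst_def)

lemma rename_alt: "rename sg p = (\<Sum>mo\<in>Poly_Mapping.keys p. mconst (Poly_Mapping.lookup p mo) * Rm sg mo)"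
  by (simp add: rename_def Rm_def)

lemma rename_super:
  assumes "finite A" "Poly_Mapping.keys p \<subseteq> A"
  shows "rename sg p = (\<Sum>mo\<in>A. mconst (Poly_Mapping.lookup p mo) * Rm sg mo)"
  unfolding rename_alt using assms
  by (intro sum.mono_neutral_left) (auto simp: in_keys_iff)

lemma rename_add: "rename sg (p + q) = rename sg p + rename sg q"
  unfolding rename_alt
  by (rule setsum_keys_plus_distrib) (auto simp: mconst_add distrib_right)

lemma rename_0[simp]: "rename sg 0 = 0" by (simp add: rename_def)

lemma rename_sum: "rename sg (sum f A) = (\<Sum>x\<in>A. rename sg (f x))"
  by (induct A rule: infinite_finite_induct) (simp_all add: rename_add)

lemma rename_single: "rename sg (Poly_Mapping.single mo c) = mconst c * Rm sg mo"
  by (simp add: rename_alt)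

lemma Rm_add: "Rm sg (m1 + m2) = Rm sg m1 * (Rm sg m2 :: 'k::comm_ring_1 mpol)"
proof -
  let ?K = "Poly_Mapping.keys m1 \<union> Poly_Mapping.keys m2"
  have f: "finite ?K" by simp
  have "Rm sg (m1 + m2) = (\<Prod>i\<in>?K. (Xv (sg i) :: 'k mpol) ^ Poly_Mapping.lookup (m1 + m2) i)"
    unfolding Rm_def keys_add_nat ..
  also have "\<dots> = (\<Prod>i\<in>?K. (Xv (sg i) :: 'k mpol) ^ Poly_Mapping.lookup m1 i) * (\<Prod>i\<in>?K. Xv (sg i) ^ Poly_Mapping.lookup m2 i)"
    by (simp add: lookup_add power_add prod.distrib)
  also have "(\<Prod>i\<in>?K. (Xv (sg i) :: 'k mpol) ^ Poly_Mapping.lookup m1 i) = Rm sg m1"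
    unfolding Rm_def using f by (intro prod.mono_neutral_right) (auto simp: in_keys_iff)
  also have "(\<Prod>i\<in>?K. (Xv (sg i) :: 'k mpol) ^ Poly_Mapping.lookup m2 i) = Rm sg m2"
    unfolding Rm_def using f by (intro prod.mono_neutral_right) (auto simp: in_keys_iff)
  finally show ?thesis .
qed

lemma rename_mult: "rename sg (p * q) = rename sg p * rename sg (q :: 'k::comm_ring_1 mpol)"
proof -
  let ?s = "\<lambda>p mo. Poly_Mapping.single mo (Poly_Mapping.lookup p mo)"
  have "p * q = (\<Sum>m1\<in>Poly_Mapping.keys p. \<Sum>m2\<in>Poly_Mapping.keys q. ?s p m1 * ?s q m2)"
    apply (subst poly_expand[of p], subst poly_expand[of q])
    apply (simp add: sum_distrib_left sum_distrib_right)
    apply (rule sum.swap)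
    done
  then have "rename sg (p * q) = (\<Sum>m1\<in>Poly_Mapping.keys p. \<Sum>m2\<in>Poly_Mapping.keys q. rename sg (?s p m1) * rename sg (?s q m2))"
    by (simp add: rename_sum mult_single rename_single Rm_add mconst_mult ac_simps)
  also have "\<dots> = rename sg p * rename sg q"
    apply (subst (3) poly_expand[of p], subst (3) poly_expand[of q])
    apply (simp add: rename_sum sum_distrib_left sum_distrib_right)
    apply (rule sum.swap)
    done
  finally show ?thesis .
qed

lemma rename_neg: "rename sg (- p) = - rename sg p"
  by (metis add_eq_0_iff rename_0 rename_add)
lemma rename_diff: "rename sg (p - q) = rename sg p - rename sg q"
  by (metis diff_conv_add_uminus rename_add rename_neg)
lemma rename_mconst: "rename sg (mconst c) = mconst c"
  by (simp add: mconst_def rename_single Rm_def)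
lemma rename_Xv: "rename sg (Xv i :: 'k::comm_ring_1 mpol) = Xv (sg i)"
  by (simp add: Xv_def rename_single Rm_def flip: mconst_def)
lemma rename_power: "rename sg (p ^ k) = rename sg (p :: 'k::comm_ring_1 mpol) ^ k"
  by (induct k) (simp_all add: rename_mult rename_mconst flip: mconst_1)

lemma rename_bipol: "rename sg (bipol c a b) = bipol c (sg a) (sg b)"
  by (simp add: bipol_def rename_sum case_prod_unfold rename_mult rename_mconst rename_power rename_Xv)

lemma vars_add: "vars (p + q) \<subseteq> vars p \<union> vars q"
  unfolding vars_def using keys_add[of p q] by blast
lemma vars_mult: "vars (p * q) \<subseteq> vars p \<union> vars q"
proof
  fix x assume "x \<in> vars (p * q)"
  then obtain mo where "mo \<in> Poly_Mapping.keys (p * q)" "x \<in> Poly_Mapping.keys mo" unfolding vars_def by blast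
  with keys_mult[of p q] obtain m1 m2 where "m1 \<in> Poly_Mapping.keys p" "m2 \<in> Poly_Mapping.keys q" "x \<in> Poly_Mapping.keys (m1 + m2)"
    by blast
  then show "x \<in> vars p \<union> vars q" unfolding vars_def keys_add_nat by blast
qed
lemma vars_neg: "vars (- p) = vars p"
  unfolding vars_def by (simp add: keys_minus)
lemma vars_diff: "vars (p - q) \<subseteq> vars p \<union> vars q"
  by (metis diff_conv_add_uminus vars_add vars_neg)
lemma vars_mconst: "vars (mconst c) = {}"
  by (simp add: vars_def mconst_def)
lemma vars_0[simp]: "vars 0 = {}" by (simp add: vars_def)
lemma vars_1[simp]: "vars 1 = {}" by (metis mconst_1 vars_mconst)
lemma vars_Xv: "vars (Xv i) \<subseteq> {i}"
  by (simp add: vars_def Xv_def)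
lemma vars_sum: "vars (sum f A) \<subseteq> (\<Union>x\<in>A. vars (f x))"
  by (induct A rule: infinite_finite_induct) (use vars_add in auto)
lemma vars_prod: "vars (prod f A) \<subseteq> (\<Union>x\<in>A. vars (f x))"
  by (induct A rule: infinite_finite_induct) (use vars_mult in auto)
lemma vars_power: "vars (p ^ k) \<subseteq> vars p"
  by (induct k) (use vars_mult in auto)

lemma vars_sub_add: "vars p \<subseteq> S \<Longrightarrow> vars q \<subseteq> S \<Longrightarrow> vars (p + q) \<subseteq> S"
  using vars_add by blast
lemma vars_sub_mult: "vars p \<subseteq> S \<Longrightarrow> vars q \<subseteq> S \<Longrightarrow> vars (p * q) \<subseteq> S"
  using vars_mult by blast
lemma vars_sub_diff: "vars p \<subseteq> S \<Longrightarrow> vars q \<subseteq> S \<Longrightarrow> vars (p - q) \<subseteq> S"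
  using vars_diff by blast
lemma vars_sub_Xv: "i \<in> S \<Longrightarrow> vars (Xv i) \<subseteq> S"
  using vars_Xv by blast

lemma vars_bipol: "vars (bipol c a b) \<subseteq> {a, b}"
proof -
  have "vars (bipol c a b) \<subseteq> (\<Union>x\<in>{(p,q). c p q \<noteq> 0}. vars (case x of (p,q) \<Rightarrow> mconst (c p q) * Xv a ^ p * Xv b ^ q))"
    unfolding bipol_def by (rule vars_sum)
  also have "\<dots> \<subseteq> {a,b}"
  proof (intro UN_least)
    fix pq :: "nat \<times> nat"
    obtain p q where pq: "pq = (p,q)" by (cases pq)
    have "vars (mconst (c p q) * Xv a ^ p * Xv b ^ q) \<subseteq> {a,b}"
      using vars_mult vars_power vars_Xv vars_mconst by (metis (no_types, lifting) insertI1 insert_commute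
          order_trans subset_insertI vars_sub_mult empty_subsetI)
    then show "vars (case pq of (p,q) \<Rightarrow> mconst (c p q) * Xv a ^ p * Xv b ^ q) \<subseteq> {a, b}" by (simp add: pq)
  qed
  finally show ?thesis .
qed

lemma vars_rename: "vars (rename sg p) \<subseteq> sg ` vars p"
proof -
  have "vars (rename sg p) \<subseteq> (\<Union>mo\<in>Poly_Mapping.keys p. vars (mconst (Poly_Mapping.lookup p mo) * Rm sg mo))"
    unfolding rename_alt by (rule vars_sum)
  also have "\<dots> \<subseteq> sg ` vars p"
  proof (intro UN_least)
    fix mo assume mo: "mo \<in> Poly_Mapping.keys p"
    have "vars (Rm sg mo :: 'a mpol) \<subseteq> (\<Union>i\<in>Poly_Mapping.keys mo. vars (Xv (sg i) ^ Poly_Mapping.lookup mo i :: 'a mpol))"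
      unfolding Rm_def by (rule vars_prod)
    also have "\<dots> \<subseteq> sg ` vars p"
      using mo vars_power vars_Xv unfolding vars_def by fastforce
    finally show "vars (mconst (Poly_Mapping.lookup p mo) * Rm sg mo) \<subseteq> sg ` vars p"
      using vars_mult vars_mconst by blast
  qed
  finally show ?thesis .
qed

lemma Xv_power: "(Xv i :: 'k::comm_ring_1 mpol) ^ k = Poly_Mapping.single (Poly_Mapping.single i k) 1"
  by (induct k) (simp_all add: Xv_def mult_single flip: single_add single_one)

lemma single_prod: "(\<Prod>i\<in>A. Poly_Mapping.single (f i) (1::'k::comm_ring_1)) = Poly_Mapping.single (\<Sum>i\<in>A. f i) 1"
  by (induct A rule: infinite_finite_induct) (simp_all add: mult_single flip: single_one)

lemma single_monomial: "Poly_Mapping.single mo (1::'k::comm_ring_1) = (\<Prod>i\<in>Poly_Mapping.keys mo. Xv i ^ Poly_Mapping.lookup mo i)"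
  by (simp add: Xv_power single_prod flip: poly_expand)

lemma poly_gen:
  fixes p :: "'k::comm_ring_1 mpol"
  shows "p = (\<Sum>mo\<in>Poly_Mapping.keys p. mconst (Poly_Mapping.lookup p mo) * (\<Prod>i\<in>Poly_Mapping.keys mo. Xv i ^ Poly_Mapping.lookup mo i))"
  apply (subst poly_expand[of p])
  apply (intro sum.cong refl)
  apply (simp add: mconst_def mult_single flip: single_monomial)
  done




definition FL :: "(nat \<Rightarrow> 'm \<Rightarrow> 'm) \<Rightarrow> nat list \<Rightarrow> (nat \<Rightarrow>\<^sub>0 nat) \<Rightarrow> 'm \<Rightarrow> 'm" where
  "FL X L mo = foldr (\<lambda>i g. (X i ^^ Poly_Mapping.lookup mo i) \<circ> g) L id"

definition XM :: "(nat \<Rightarrow> 'm \<Rightarrow> 'm) \<Rightarrow> (nat \<Rightarrow>\<^sub>0 nat) \<Rightarrow> 'm \<Rightarrow> 'm" where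
  "XM X mo = FL X (sorted_list_of_set (Poly_Mapping.keys mo)) mo"

lemma FL_Nil[simp]: "FL X [] mo = id" by (simp add: FL_def)
lemma FL_Cons[simp]: "FL X (i # L) mo = (X i ^^ Poly_Mapping.lookup mo i) \<circ> FL X L mo" by (simp add: FL_def)

lemma FL_filter: "Poly_Mapping.keys mo \<subseteq> K \<Longrightarrow> FL X (filter (\<lambda>i. i \<in> K) L) mo = FL X L mo"
proof (induct L)
  case (Cons a L)
  have "a \<notin> K \<Longrightarrow> Poly_Mapping.lookup mo a = 0" using Cons.prems by (auto simp: in_keys_iff)
  then show ?case using Cons by auto
qed simp

lemma XM_upt: "Poly_Mapping.keys mo \<subseteq> K \<Longrightarrow> Poly_Mapping.degree mo \<le> N \<Longrightarrow>
  XM X mo = FL X (filter (\<lambda>i. i \<in> K) [0..<N]) mo"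
proof -
  assume K: "Poly_Mapping.keys mo \<subseteq> K" and N: "Poly_Mapping.degree mo \<le> N"
  have "[0..<N] = [0..<Poly_Mapping.degree mo] @ [Poly_Mapping.degree mo..<N]"
    using N by (metis le0 le_add_diff_inverse upt_add_eq_append)
  then have "FL X [0..<N] mo = FL X [0..<Poly_Mapping.degree mo] mo"
  proof -
    have "\<And>L. set L \<subseteq> {Poly_Mapping.degree mo..} \<Longrightarrow> FL X L mo = id"
    proof -
      fix L show "set L \<subseteq> {Poly_Mapping.degree mo..} \<Longrightarrow> FL X L mo = id"
        by (induct L) (auto simp: beyond_degree_lookup_zero)
    qed
    moreover have "\<And>L1 L2. FL X (L1 @ L2) mo = FL X L1 mo \<circ> FL X L2 mo"
    proof -
      fix L1 L2 show "FL X (L1 @ L2) mo = FL X L1 mo \<circ> FL X L2 mo"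
        by (induct L1) auto
    qed
    ultimately show ?thesis using \<open>[0..<N] = _\<close>
      by (metis comp_id atLeastLessThan_iff atLeast_iff set_upt subsetI)
  qed
  moreover have "XM X mo = FL X [0..<Poly_Mapping.degree mo] mo"
    unfolding XM_def sorted_list_of_set_keys by (rule FL_filter) simp
  ultimately show ?thesis using FL_filter[OF K, of X "[0..<N]"] by argo
qed

locale amod =
  fixes sc :: "'k::comm_ring_1 \<Rightarrow> 'm::ab_group_add \<Rightarrow> 'm" and X :: "nat \<Rightarrow> 'm \<Rightarrow> 'm" and S :: "nat set"
  assumes md: "module sc"
    and Xhom: "\<And>i. i \<in> S \<Longrightarrow> module_hom sc sc (X i)"
    and Xcomm: "\<And>i j m. i \<in> S \<Longrightarrow> j \<in> S \<Longrightarrow> X i (X j m) = X j (X i m)"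
begin

lemma hom_comp: "module_hom sc sc f \<Longrightarrow> module_hom sc sc g \<Longrightarrow> module_hom sc sc (f \<circ> g)"
  by (simp add: module_hom_iff)
lemma hom_id: "module_hom sc sc id"
  using md by (simp add: module_hom_iff)
lemma hom_pow: "module_hom sc sc f \<Longrightarrow> module_hom sc sc (f ^^ k)"
  by (induct k) (simp_all add: hom_id hom_comp)

lemma hom_sum: "(\<And>x. x \<in> A \<Longrightarrow> module_hom sc sc (f x)) \<Longrightarrow> module_hom sc sc (\<lambda>m. \<Sum>x\<in>A. f x m)"
  using md by (auto simp: module_hom_iff sum.distrib module.scale_sum_right)

lemma FL_hom: "set L \<subseteq> S \<Longrightarrow> module_hom sc sc (FL X L mo)"
  by (induct L) (auto simp: hom_id hom_comp hom_pow Xhom)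

lemma comm_pow: "(\<And>m. f (g m) = g (f m)) \<Longrightarrow> f ((g ^^ k) m) = (g ^^ k) (f m)"
  by (induct k) auto

lemma FL_comm: "set L \<subseteq> S \<Longrightarrow> (\<And>i m. i \<in> S \<Longrightarrow> f (X i m) = X i (f m)) \<Longrightarrow> f (FL X L mo m) = FL X L mo (f m)"
proof (induct L arbitrary: m)
  case (Cons i L)
  then have "f ((X i ^^ Poly_Mapping.lookup mo i) (FL X L mo m)) = (X i ^^ Poly_Mapping.lookup mo i) (f (FL X L mo m))"
    by (intro comm_pow) auto
  with Cons show ?case by simp
qed simp

lemma FL_add: "set L \<subseteq> S \<Longrightarrow> FL X L (m1 + m2) = FL X L m1 \<circ> FL X L m2"
proof (induct L)
  case (Cons i L)
  have c: "(X i ^^ Poly_Mapping.lookup m2 i) (FL X L m1 m) = FL X L m1 ((X i ^^ Poly_Mapping.lookup m2 i) m)" for m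
    using Cons.prems by (intro FL_comm) (auto, metis comm_pow Xcomm)
  show ?case using Cons by (auto simp: lookup_add funpow_add c)
qed simp

lemma XM_hom: "Poly_Mapping.keys mo \<subseteq> S \<Longrightarrow> module_hom sc sc (XM X mo)"
  unfolding XM_def by (intro FL_hom) simp

lemma XM_comm: "Poly_Mapping.keys mo \<subseteq> S \<Longrightarrow> (\<And>i m. i \<in> S \<Longrightarrow> f (X i m) = X i (f m)) \<Longrightarrow> f (XM X mo m) = XM X mo (f m)"
  unfolding XM_def by (intro FL_comm) auto

lemma XM_add: "Poly_Mapping.keys m1 \<subseteq> S \<Longrightarrow> Poly_Mapping.keys m2 \<subseteq> S \<Longrightarrow> XM X (m1 + m2) = XM X m1 \<circ> XM X m2"
proof -
  assume a: "Poly_Mapping.keys m1 \<subseteq> S" "Poly_Mapping.keys m2 \<subseteq> S"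
  let ?K = "Poly_Mapping.keys m1 \<union> Poly_Mapping.keys m2"
  let ?N = "Poly_Mapping.degree m1 + Poly_Mapping.degree m2 + Poly_Mapping.degree (m1 + m2)"
  let ?L = "filter (\<lambda>i. i \<in> ?K) [0..<?N]"
  have L: "set ?L \<subseteq> S" using a by auto
  have "XM X (m1 + m2) = FL X ?L (m1 + m2)" by (rule XM_upt) (auto simp: keys_add_nat)
  also have "\<dots> = FL X ?L m1 \<circ> FL X ?L m2" by (rule FL_add[OF L])
  also have "FL X ?L m1 = XM X m1" by (rule XM_upt[symmetric]) auto
  also have "FL X ?L m2 = XM X m2" by (rule XM_upt[symmetric]) auto
  finally show ?thesis .
qed

lemma XM_0: "XM X 0 = id" by (simp add: XM_def)
lemma XM_Xv: "XM X (Poly_Mapping.single i 1) = X i" by (simp add: XM_def)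

lemma act_alt: "act sc X p m = (\<Sum>mo\<in>Poly_Mapping.keys p. sc (Poly_Mapping.lookup p mo) (XM X mo m))"
  by (simp add: act_def XM_def FL_def)

lemma act_add: "act sc X (p + q) m = act sc X p m + act sc X q m"
  unfolding act_alt
  by (rule setsum_keys_plus_distrib) (auto simp: module.scale_left_distrib[OF md] module.scale_zero_left[OF md])

lemma act_0[simp]: "act sc X 0 m = 0" by (simp add: act_def)

lemma act_neg: "act sc X (- p) m = - act sc X p m"
  by (metis act_0 act_add add_eq_0_iff)
lemma act_diff: "act sc X (p - q) m = act sc X p m - act sc X q m"
  by (metis act_add act_neg diff_conv_add_uminus)
lemma act_sum: "act sc X (sum f A) m = (\<Sum>x\<in>A. act sc X (f x) m)"
  by (induct A rule: infinite_finite_induct) (simp_all add: act_add)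

lemma act_single: "act sc X (Poly_Mapping.single mo c) m = sc c (XM X mo m)"
  using md by (simp add: act_alt module.scale_zero_left)

lemma act_mconst: "act sc X (mconst c) m = sc c m"
  by (simp add: mconst_def act_single XM_0)
lemma act_Xv: "act sc X (Xv i) m = X i m"
  using md by (simp add: Xv_def act_single XM_def module.scale_one)

lemma keys_sub: "vars p \<subseteq> S \<Longrightarrow> mo \<in> Poly_Mapping.keys p \<Longrightarrow> Poly_Mapping.keys mo \<subseteq> S"
  unfolding vars_def by blast

lemma act_hom: "vars p \<subseteq> S \<Longrightarrow> module_hom sc sc (act sc X p)"
  unfolding act_alt[abs_def]
  apply (rule hom_sum)
  apply (rule module_pair.module_hom_scale)
   apply (simp add: module_pair_def md)
  apply (rule XM_hom, erule keys_sub, assumption)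
  done

lemma act_comm: "vars p \<subseteq> S \<Longrightarrow> module_hom sc sc f \<Longrightarrow> (\<And>i m. i \<in> S \<Longrightarrow> f (X i m) = X i (f m)) \<Longrightarrow>
   f (act sc X p m) = act sc X p (f m)"
  unfolding act_alt
  by (simp add: module_hom.sum module_hom.scale XM_comm keys_sub)

lemma act_single_mult: "Poly_Mapping.keys m1 \<subseteq> S \<Longrightarrow> Poly_Mapping.keys m2 \<subseteq> S \<Longrightarrow>
  act sc X (Poly_Mapping.single m1 c1 * Poly_Mapping.single m2 c2) m =
  act sc X (Poly_Mapping.single m1 c1) (act sc X (Poly_Mapping.single m2 c2) m)"
  by (simp add: mult_single act_single XM_add module_hom.scale[OF XM_hom] module.scale_scale[OF md])

lemma act_mult:
  assumes p: "vars p \<subseteq> S" and q: "vars q \<subseteq> S"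
  shows "act sc X (p * q) m = act sc X p (act sc X q m)"
proof -
  let ?s = "\<lambda>p mo. Poly_Mapping.single mo (Poly_Mapping.lookup p mo)"
  have "p * q = (\<Sum>m1\<in>Poly_Mapping.keys p. \<Sum>m2\<in>Poly_Mapping.keys q. ?s p m1 * ?s q m2)"
    apply (subst poly_expand[of p], subst poly_expand[of q])
    apply (simp add: sum_distrib_left sum_distrib_right)
    apply (rule sum.swap)
    done
  then have "act sc X (p * q) m = (\<Sum>m1\<in>Poly_Mapping.keys p. \<Sum>m2\<in>Poly_Mapping.keys q. act sc X (?s p m1) (act sc X (?s q m2) m))"
    using p q by (simp add: act_sum act_single_mult keys_sub)
  also have "\<dots> = (\<Sum>m1\<in>Poly_Mapping.keys p. act sc X (?s p m1) (act sc X q m))"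
  proof (intro sum.cong refl)
    fix m1 assume m1: "m1 \<in> Poly_Mapping.keys p"
    have h: "module_hom sc sc (act sc X (?s p m1))"
      by (rule act_hom) (use keys_sub[OF p m1] in \<open>auto simp: vars_def\<close>)
    show "(\<Sum>m2\<in>Poly_Mapping.keys q. act sc X (?s p m1) (act sc X (?s q m2) m)) = act sc X (?s p m1) (act sc X q m)"
      by (subst (2) poly_expand[of q]) (simp add: act_sum module_hom.sum[OF h])
  qed
  also have "\<dots> = act sc X p (act sc X q m)"
    by (subst (3) poly_expand[of p]) (simp add: act_sum)
  finally show ?thesis .
qed

end




locale lk = amod sc X S
  for sc :: "'k::comm_ring_1 \<Rightarrow> 'm::ab_group_add \<Rightarrow> 'm" and X S +
  fixes E T :: "'m \<Rightarrow> 'm" and a :: nat and P :: "'k mpol"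
  assumes aS: "a \<in> S" and bS: "a + 1 \<in> S"
    and Ehom: "module_hom sc sc E" and Eidem: "\<And>m. E (E m) = E m"
    and EX: "\<And>i m. i \<in> S \<Longrightarrow> X i (E m) = E (X i m)"
    and Thom: "module_hom sc sc T" and TE: "\<And>m. T (E m) = E (T m)"
    and PS: "vars P \<subseteq> S"
    and Tx: "\<And>i m. i \<in> S \<Longrightarrow> T (X i (E m)) - X (sidx a i) (T (E m)) =
        (if i = a then - act sc X P (E m) else if i = a + 1 then act sc X P (E m) else 0)"
begin

abbreviation A where "A p m \<equiv> act sc X p m"

lemma act_E: "vars p \<subseteq> S \<Longrightarrow> A p (E m) = E (A p m)"
  by (rule act_comm[symmetric]) (auto simp: Ehom EX)

lemma sidx_S: "i \<in> S \<Longrightarrow> sidx a i \<in> S"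
  using aS bS by (auto simp: sidx_def)

lemma vars_spol: "vars p \<subseteq> S \<Longrightarrow> vars (spol a p) \<subseteq> S"
  unfolding spol_def using vars_rename[of "sidx a" p] sidx_S by blast

lemma ab: "a \<noteq> a + 1" by simp

lemma dpol_eq: "(Xv a - Xv (a + 1)) * q = spol a g - g \<Longrightarrow> dpol a g = q"
  unfolding dpol_def by (rule pdiv_eq[OF ab])

definition good :: "'k mpol \<Rightarrow> bool" where
  "good g \<longleftrightarrow> vars g \<subseteq> S \<and> vars (dpol a g) \<subseteq> S \<and>
     (Xv a - Xv (a + 1)) * dpol a g = spol a g - g \<and>
     (\<forall>m. T (A g (E m)) = A (spol a g) (T (E m)) + A (dpol a g * P) (E m))"

lemma good_add: assumes g: "good g" and h: "good h" shows "good (g + h)"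
proof -
  have sp: "spol a (g + h) = spol a g + spol a h" by (simp add: spol_def rename_add)
  have dp: "dpol a (g + h) = dpol a g + dpol a h"
    by (rule dpol_eq) (use g h in \<open>simp add: good_def sp distrib_left\<close>)
  have "T (A (g + h) (E m)) = A (spol a (g + h)) (T (E m)) + A (dpol a (g + h) * P) (E m)" for m
    using g h by (simp add: good_def act_add module_hom.add[OF Thom] sp dp distrib_right)
  then show ?thesis using g h unfolding good_def
    by (simp add: sp dp vars_sub_add distrib_left)
qed

lemma good_mult: assumes g: "good g" and h: "good h" shows "good (g * h)"
proof -
  have gS: "vars g \<subseteq> S" and hS: "vars h \<subseteq> S" and DgS: "vars (dpol a g) \<subseteq> S" and DhS: "vars (dpol a h) \<subseteq> S"
    using g h by (auto simp: good_def)
  have sgS: "vars (spol a g) \<subseteq> S" and shS: "vars (spol a h) \<subseteq> S" using gS hS vars_spol by blast+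
  have sp: "spol a (g * h) = spol a g * spol a h" by (simp add: spol_def rename_mult)
  have eq: "(Xv a - Xv (a + 1)) * (spol a g * dpol a h + h * dpol a g) = spol a (g * h) - g * h"
  proof -
    have "(Xv a - Xv (a + 1)) * dpol a g = spol a g - g" "(Xv a - Xv (a + 1)) * dpol a h = spol a h - h"
      using g h by (auto simp: good_def)
    then show ?thesis
    proof -
      assume e1: "(Xv a - Xv (a + 1)) * dpol a g = spol a g - g" and e2: "(Xv a - Xv (a + 1)) * dpol a h = spol a h - h"
      have "(Xv a - Xv (a + 1)) * (spol a g * dpol a h + h * dpol a g) =
         spol a g * ((Xv a - Xv (a + 1)) * dpol a h) + h * ((Xv a - Xv (a + 1)) * dpol a g)"
        by (simp add: algebra_simps)
      also have "\<dots> = spol a g * (spol a h - h) + h * (spol a g - g)" by (simp only: e1 e2)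
      also have "\<dots> = spol a g * spol a h - g * h" by (simp add: algebra_simps)
      finally show ?thesis by (simp only: sp)
    qed
  qed
  have dp: "dpol a (g * h) = spol a g * dpol a h + h * dpol a g"
    by (rule dpol_eq[OF eq])
  have PS': "vars P \<subseteq> S" by (rule PS)
  have L: "T (A (g * h) (E m)) = A (spol a (g * h)) (T (E m)) + A (dpol a (g * h) * P) (E m)" for m
  proof -
    have "T (A (g * h) (E m)) = T (A g (E (A h m)))"
      by (simp add: act_mult gS hS act_E)
    also have "\<dots> = A (spol a g) (T (E (A h m))) + A (dpol a g * P) (E (A h m))"
      using g by (simp add: good_def)
    also have "T (E (A h m)) = A (spol a h) (T (E m)) + A (dpol a h * P) (E m)"
      using h hS by (simp add: good_def flip: act_E)
    also have "A (spol a g) (A (spol a h) (T (E m)) + A (dpol a h * P) (E m)) =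
        A (spol a g * spol a h) (T (E m)) + A (spol a g * (dpol a h * P)) (E m)"
      by (simp add: module_hom.add[OF act_hom[OF sgS]] act_mult sgS shS DhS PS vars_sub_mult)
    also have "A (dpol a g * P) (E (A h m)) = A (dpol a g * P * h) (E m)"
      by (simp add: act_mult DgS PS hS vars_sub_mult act_E)
    moreover have r: "dpol a (g*h) * P = spol a g * (dpol a h * P) + dpol a g * P * h"
      unfolding dp by (simp add: algebra_simps)
    ultimately show ?thesis
      by (simp only: sp r act_add add.assoc)
  qed
  show ?thesis unfolding good_def
  proof (intro conjI allI L)
    show "vars (g * h) \<subseteq> S" using gS hS by (rule vars_sub_mult)
    show "vars (dpol a (g * h)) \<subseteq> S" unfolding dp using sgS DhS hS DgS by (intro vars_sub_add vars_sub_mult)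
    show "(Xv a - Xv (a + 1)) * dpol a (g * h) = spol a (g * h) - g * h"
      unfolding dp by (rule eq)
  qed
qed


lemma good_mconst: "good (mconst c)"
proof -
  have sp: "spol a (mconst c) = mconst c" by (simp add: spol_def rename_mconst)
  have dp: "dpol a (mconst c) = 0" by (rule dpol_eq) (simp add: sp)
  show ?thesis unfolding good_def
    by (simp add: sp dp vars_mconst act_mconst module_hom.scale[OF Thom])
qed

lemma good_Xv: assumes i: "i \<in> S" shows "good (Xv i)"
proof -
  have sp: "spol a (Xv i) = Xv (sidx a i)" by (simp add: spol_def rename_Xv)
  define q where "q = (if i = a then -1 else if i = a + 1 then 1 else (0::'k mpol))"
  have eqq: "(Xv a - Xv (a + 1)) * q = spol a (Xv i) - Xv i"
    by (auto simp: sp q_def sidx_def)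
  have dp: "dpol a (Xv i) = q"
    by (rule dpol_eq[OF eqq])
  have qS: "vars q \<subseteq> S" by (simp add: q_def vars_neg vars_mconst flip: mconst_1)
  have L: "T (A (Xv i) (E m)) = A (spol a (Xv i)) (T (E m)) + A (dpol a (Xv i) * P) (E m)" for m
    using Tx[OF i, of m] by (auto simp: act_Xv sp dp q_def act_neg algebra_simps)
  show ?thesis unfolding good_def
    using L qS vars_Xv[of i] i eqq by (auto simp: dp)
qed

lemma good_1: "good 1" using good_mconst[of 1] by simp

lemma good_sum: "(\<And>x. x \<in> B \<Longrightarrow> good (f x)) \<Longrightarrow> good (sum f B)"
  by (induct B rule: infinite_finite_induct) (auto intro: good_add simp: good_mconst[of 0, simplified])

lemma good_prod: "(\<And>x. x \<in> B \<Longrightarrow> good (f x)) \<Longrightarrow> good (prod f B)"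
  by (induct B rule: infinite_finite_induct) (auto intro: good_mult simp: good_1)

lemma good_power: "good g \<Longrightarrow> good (g ^ k)"
  by (induct k) (auto intro: good_mult simp: good_1)

lemma good_all: assumes "vars p \<subseteq> S" shows "good p"
proof -
  have "good (\<Sum>mo\<in>Poly_Mapping.keys p. mconst (Poly_Mapping.lookup p mo) * (\<Prod>i\<in>Poly_Mapping.keys mo. Xv i ^ Poly_Mapping.lookup mo i))"
    using assms
    by (intro good_sum good_mult good_mconst good_prod good_power good_Xv) (auto simp: vars_def)
  then show ?thesis by (simp flip: poly_gen)
qed

lemma main:
  assumes fS: "vars f \<subseteq> S" and f0: "\<And>m. A f (E m) = 0"
    and TT: "\<And>m. T (T (E m)) = A (dpol a P) (T (E m))"
    and P': "P' = spol a P"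
  shows "A (dpol a f * P * P') (E m) = 0 \<and> A (spol a f * P * P') (E m) = 0"
proof -
  have gf: "good f" by (rule good_all[OF fS])
  have gP: "good P" by (rule good_all[OF PS])
  define D where "D = dpol a f"
  define s where "s = spol a f"
  define dP where "dP = dpol a P"
  define \<Delta> where "\<Delta> = (Xv a - Xv (a + 1) :: 'k mpol)"
  have DS: "vars D \<subseteq> S" and sS: "vars s \<subseteq> S" and dPS: "vars dP \<subseteq> S" and P'S: "vars P' \<subseteq> S"
    using gf gP fS PS aS bS by (auto simp: good_def D_def s_def dP_def P' \<Delta>_def intro!: vars_spol vars_sub_diff vars_sub_Xv)
  have \<Delta>S: "vars \<Delta> \<subseteq> S" unfolding \<Delta>_def by (intro vars_sub_diff vars_sub_Xv aS bS)
  have sf: "s = f + \<Delta> * D" using gf by (simp add: good_def s_def D_def \<Delta>_def)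
  have P'P: "P' = P + \<Delta> * dP" using gP by (simp add: good_def P' dP_def \<Delta>_def)
  have Lf: "T (A f (E m)) = A s (T (E m)) + A (D * P) (E m)" for m
    using gf by (simp add: good_def s_def D_def)
  have fz: "A f (T (E m)) = 0" for m using f0[of "T m"] by (simp add: TE)
  let ?u = "T (E m)" and ?v = "E m"
  have T0: "T 0 = 0" by (rule module_hom.zero[OF Thom])
  have hD: "module_hom sc sc (A \<Delta>)" by (rule act_hom[OF \<Delta>S])
  have hP': "module_hom sc sc (A P')" by (rule act_hom[OF P'S])
  have eqA: "A (\<Delta> * D) ?u + A (D * P) ?v = 0"
  proof -
    have "0 = A s ?u + A (D * P) ?v" using Lf[of m] f0[of m] T0 by simp
    also have "A s ?u = A (\<Delta> * D) ?u" by (simp add: sf act_add fz)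
    finally show ?thesis by simp
  qed
  have eqB: "A (D * P') ?u = 0"
  proof -
    have "T (A f (E (T m))) = A s (T (E (T m))) + A (D * P) (E (T m))" by (rule Lf)
    then have "0 = A s (A dP ?u) + A (D * P) ?u" using f0[of "T m"] T0 TT[of m] by (simp add: TE dP_def)
    also have "A s (A dP ?u) + A (D * P) ?u = A (s * dP + D * P) ?u"
      by (simp add: act_mult sS dPS act_add)
    also have "s * dP + D * P = dP * f + D * P'" by (simp add: sf P'P algebra_simps)
    also have "A (dP * f + D * P') ?u = A (D * P') ?u"
      by (simp add: act_add act_mult dPS fS fz module_hom.zero[OF act_hom[OF dPS]])
    finally show ?thesis by simp
  qed
  have g1: "A (D * P * P') ?v = 0"
  proof -
    have "A (D * P * P') ?v = A P' (A (D * P) ?v)"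
      by (simp add: act_mult[symmetric] DS PS P'S vars_sub_mult mult.commute)
    also have "A (D * P) ?v = - A (\<Delta> * D) ?u" using eqA by (simp add: eq_neg_iff_add_eq_0 add.commute)
    also have "A P' (- A (\<Delta> * D) ?u) = - A (P' * (\<Delta> * D)) ?u"
      by (simp add: module_hom.neg[OF hP'] act_mult P'S \<Delta>S DS vars_sub_mult)
    also have "P' * (\<Delta> * D) = \<Delta> * (D * P')" by (simp add: algebra_simps)
    also have "A (\<Delta> * (D * P')) ?u = 0"
      by (simp add: act_mult \<Delta>S DS P'S vars_sub_mult eqB module_hom.zero[OF hD])
    finally show ?thesis by simp
  qed
  have g2: "A (s * P * P') ?v = 0"
  proof -
    have "s * P * P' = P * P' * f + \<Delta> * (D * P * P')" by (simp add: sf algebra_simps)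
    then have "A (s * P * P') ?v = A (P * P') (A f ?v) + A \<Delta> (A (D * P * P') ?v)"
      by (simp add: act_add act_mult PS P'S fS \<Delta>S DS vars_sub_mult)
    then show ?thesis using g1 f0[of m]
      by (simp add: module_hom.zero[OF hD] module_hom.zero[OF act_hom] PS P'S vars_sub_mult)
  qed
  show ?thesis using g1 g2 by (simp add: D_def s_def)
qed

end




theorem lemma4p2:
  fixes A :: "'i::finite \<Rightarrow> 'i \<Rightarrow> int" and d :: "'i \<Rightarrow> int"
    and kg :: "int \<Rightarrow> 'k::comm_ring_1 set"
    and t :: "'i \<Rightarrow> 'i \<Rightarrow> nat \<Rightarrow> nat \<Rightarrow> 'k" and w :: "'i \<Rightarrow> nat \<Rightarrow> nat \<Rightarrow> 'k"
    and sc :: "'k \<Rightarrow> 'm::ab_group_add \<Rightarrow> 'm"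
    and E :: "'i list \<Rightarrow> 'm \<Rightarrow> 'm" and X :: "nat \<Rightarrow> 'm \<Rightarrow> 'm" and T :: "nat \<Rightarrow> 'm \<Rightarrow> 'm"
    and n a :: nat and nu :: "'i list" and f :: "'k mpol"
  assumes "cartan A d" and "graded kg" and "Qdata kg A d t" and "Pdata kg A d w"
    and "n \<ge> 2" and "length nu = n" and "1 \<le> a" and "a < n"
    and "nth1 nu a = nth1 nu (a + 1)"
    and "Rmod n w t sc E X T"
    and "\<forall>\<alpha>\<in>Poly_Mapping.keys f. Poly_Mapping.keys \<alpha> \<subseteq> {1..n}"
    and "\<forall>m. act sc X f (E nu m) = 0"
  shows "(\<forall>m. act sc X (dpol a f * bipol (w (nth1 nu a)) a (a + 1) * bipol (w (nth1 nu a)) (a + 1) a) (E nu m) = 0) \<and>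
         (\<forall>m. act sc X (spol a f * bipol (w (nth1 nu a)) a (a + 1) * bipol (w (nth1 nu a)) (a + 1) a) (E nu m) = 0)"
proof -
  note R = assms(10)[unfolded Rmod_def]
  have len: "length nu = n" by fact
  have aS: "a \<in> {1..n}" and bS: "a + 1 \<in> {1..n}" and aT: "a \<in> {1..<n}" using assms(7,8) by auto
  have eqa: "nth1 nu a = nth1 nu (a + 1)" by fact
  have ss: "sseq a nu = nu"
  proof -
    have "nu ! a = nu ! (a - 1)" using eqa assms(7) by simp
    then show ?thesis unfolding sseq_def by (metis list_update_id)
  qed
  define P where "P = bipol (w (nth1 nu a)) a (a + 1)"
  have R1: "module sc" using R by (elim conjE) assumption
  have R2: "\<forall>nu. length nu = n \<longrightarrow> module_hom sc sc (E nu)" using R by (elim conjE) assumption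
  have R3: "\<forall>k\<in>{1..n}. module_hom sc sc (X k)" using R by (elim conjE) assumption
  have R4: "\<forall>l\<in>{1..<n}. module_hom sc sc (T l)" using R by (elim conjE) assumption
  have R5: "\<forall>nu nu' m. length nu = n \<longrightarrow> length nu' = n \<longrightarrow>
        E nu (E nu' m) = (if nu = nu' then E nu m else 0)" using R by (elim conjE) assumption
  have R7: "\<forall>k\<in>{1..n}. \<forall>l\<in>{1..n}. \<forall>m. X k (X l m) = X l (X k m)" using R by (elim conjE) assumption
  have R8: "\<forall>k\<in>{1..n}. \<forall>nu m. length nu = n \<longrightarrow> X k (E nu m) = E nu (X k m)" using R by (elim conjE) assumption
  have R9: "\<forall>l\<in>{1..<n}. \<forall>nu m. length nu = n \<longrightarrow> T l (E nu m) = E (sseq l nu) (T l m)" using R by (elim conjE) assumption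
  have R11: "\<forall>k\<in>{1..<n}. \<forall>nu m. length nu = n \<longrightarrow>
        T k (T k (E nu m)) =
          (if nth1 nu k = nth1 nu (k + 1)
           then act sc X (dpol k (bipol (w (nth1 nu k)) k (k + 1))) (T k (E nu m))
           else act sc X (bipol (t (nth1 nu k) (nth1 nu (k + 1))) k (k + 1)) (E nu m))" using R by (elim conjE) assumption
  have R12: "\<forall>k\<in>{1..<n}. \<forall>l\<in>{1..n}. \<forall>nu m. length nu = n \<longrightarrow>
        T k (X l (E nu m)) - X (sidx k l) (T k (E nu m)) =
          (if l = k \<and> nth1 nu k = nth1 nu (k + 1)
           then - act sc X (bipol (w (nth1 nu k)) k (k + 1)) (E nu m)
           else if l = k + 1 \<and> nth1 nu k = nth1 nu (k + 1)
           then act sc X (bipol (w (nth1 nu k)) k (k + 1)) (E nu m)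
           else 0)" using R by (elim conjE) assumption
  have amd: "amod sc X {1..n}"
  proof (rule amod.intro)
    show "module sc" by (fact R1)
    show "i \<in> {1..n} \<Longrightarrow> module_hom sc sc (X i)" for i using R3 by blast
    show "i \<in> {1..n} \<Longrightarrow> j \<in> {1..n} \<Longrightarrow> X i (X j m) = X j (X i m)" for i j m using R7 by blast
  qed
  interpret am: amod sc X "{1..n}" by (rule amd)
  interpret L: lk sc X "{1..n}" "E nu" "T a" a P
  proof (rule lk.intro[OF amd], rule lk_axioms.intro)
    show "a \<in> {1..n}" "a + 1 \<in> {1..n}" by (fact aS, fact bS)
    show "module_hom sc sc (E nu)" using R2 len by blast
    show "E nu (E nu m) = E nu m" for m using R5 len by simp
    show "i \<in> {1..n} \<Longrightarrow> X i (E nu m) = E nu (X i m)" for i m using R8 len by blast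
    show "module_hom sc sc (T a)" using R4 aT by blast
    show "T a (E nu m) = E nu (T a m)" for m using R9 aT len ss by metis
    show "vars P \<subseteq> {1..n}" unfolding P_def using vars_bipol aS bS by blast
    show "i \<in> {1..n} \<Longrightarrow> T a (X i (E nu m)) - X (sidx a i) (T a (E nu m)) =
        (if i = a then - act sc X P (E nu m) else if i = a + 1 then act sc X P (E nu m) else 0)" for i m
      using R12 aT len eqa unfolding P_def by simp
  qed
  have fS: "vars f \<subseteq> {1..n}" using assms(11) unfolding vars_def by blast
  have TT: "T a (T a (E nu m)) = act sc X (dpol a P) (T a (E nu m))" for m
    using R11 aT len eqa unfolding P_def by simp
  have P': "bipol (w (nth1 nu a)) (a + 1) a = spol a P"
    unfolding P_def spol_def rename_bipol by (simp add: sidx_def)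
  show ?thesis
    using L.main[OF fS _ TT P'] assms(12) unfolding P_def by blast
qed


end
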